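(* For every integer $n \geq 2$, $$P_{11}(n) := \prod_{j=5}^{n} p_j > \left(n \log(n)\right)^n e^{-2n-2},$$ where $p_j$ denotes the $j$-th prime ($p_1 = 2, p_2 = 3, \dots$, so $p_5 = 11$), and the empty product (for $n < 5$) equals $1$. *)

theory Defs
  imports "HOL-Analysis.Analysis" "HOL-Computational_Algebra.Primes"
begin

text \<open>The j-th prime, 1-indexed: nth_prime 1 = 2, nth_prime 2 = 3, ...
  (enumerate is 0-indexed, so we shift by one).\<close>
definition nth_prime :: "nat \<Rightarrow> nat" where
  "nth_prime j = enumerate {p::nat. prime p} (j - 1)"

end

theory Submission
  imports Defs
begin

lemma inf_primes: "infinite {p::nat. prime p}"
  using primes_infinite by simp

lemma nth_prime_1: "nth_prime 1 = 2"
proof -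
  have "(LEAST n. n \<in> {p::nat. prime p}) = 2"
    by (rule Least_equality) (auto simp: prime_ge_2_nat)
  then show ?thesis by (simp add: nth_prime_def enumerate_0)
qed

lemma nth_prime_next0:
  assumes "nth_prime (Suc k) = a" "prime b" "a < b" "\<forall>s\<in>set [Suc a..<b]. \<not> prime s"
  shows "nth_prime (Suc (Suc k)) = b"
proof -
  have "enumerate {p::nat. prime p} (Suc k) = (LEAST s. s \<in> {p. prime p} \<and> enumerate {p::nat. prime p} k < s)"
    by (rule enumerate_Suc''[OF inf_primes])
  also have "\<dots> = b"
  proof (rule Least_equality)
    show "b \<in> {p. prime p} \<and> enumerate {p::nat. prime p} k < b"
      using assms by (simp add: nth_prime_def)
  next
    fix y assume "y \<in> {p. prime p} \<and> enumerate {p::nat. prime p} k < y"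
    then have "prime y" "a < y" using assms(1) by (auto simp: nth_prime_def)
    show "b \<le> y"
    proof (rule ccontr)
      assume "\<not> b \<le> y"
      then have "y \<in> set [Suc a..<b]" using \<open>a < y\<close> by simp
      then show False using assms(4) \<open>prime y\<close> by blast
    qed
  qed
  finally show ?thesis by (simp add: nth_prime_def)
qed

lemma nth_prime_next:
  assumes "nth_prime k = a" "1 \<le> k" "prime b" "a < b" "\<forall>s\<in>set [Suc a..<b]. \<not> prime s"
    and "k1 = k + 1"
  shows "nth_prime k1 = b"
proof -
  obtain k' where k: "k = Suc k'" using assms(2) by (cases k) auto
  show ?thesis using nth_prime_next0[of k' a b] assms k by simp
qed

lemma np2: "nth_prime 2 = 3" by (rule nth_prime_next[OF nth_prime_1, of 3]) simp_all
lemma np3: "nth_prime 3 = 5" by (rule nth_prime_next[OF np2, of 5]) simp_all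
lemma np4: "nth_prime 4 = 7" by (rule nth_prime_next[OF np3, of 7]) simp_all
lemma np5: "nth_prime 5 = 11" by (rule nth_prime_next[OF np4, of 11]) simp_all
lemma np6: "nth_prime 6 = 13" by (rule nth_prime_next[OF np5, of 13]) simp_all
lemma np7: "nth_prime 7 = 17" by (rule nth_prime_next[OF np6, of 17]) simp_all
lemma np8: "nth_prime 8 = 19" by (rule nth_prime_next[OF np7, of 19]) simp_all
lemma np9: "nth_prime 9 = 23" by (rule nth_prime_next[OF np8, of 23]) simp_all
lemma np10: "nth_prime 10 = 29" by (rule nth_prime_next[OF np9, of 29]) simp_all
lemma np11: "nth_prime 11 = 31" by (rule nth_prime_next[OF np10, of 31]) simp_all
lemma np12: "nth_prime 12 = 37" by (rule nth_prime_next[OF np11, of 37]) simp_all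
lemma np13: "nth_prime 13 = 41" by (rule nth_prime_next[OF np12, of 41]) simp_all
lemma np14: "nth_prime 14 = 43" by (rule nth_prime_next[OF np13, of 43]) simp_all
lemma np15: "nth_prime 15 = 47" by (rule nth_prime_next[OF np14, of 47]) simp_all
lemma np16: "nth_prime 16 = 53" by (rule nth_prime_next[OF np15, of 53]) simp_all
lemma np17: "nth_prime 17 = 59" by (rule nth_prime_next[OF np16, of 59]) simp_all
lemma np18: "nth_prime 18 = 61" by (rule nth_prime_next[OF np17, of 61]) simp_all
lemma np19: "nth_prime 19 = 67" by (rule nth_prime_next[OF np18, of 67]) simp_all
lemma np20: "nth_prime 20 = 71" by (rule nth_prime_next[OF np19, of 71]) simp_all

lemma central_binom_le: "(2*m+1 choose m) \<le> 4^m"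
proof -
  have sub: "{m, m+1} \<subseteq> {..2*m+1}" by auto
  have "(\<Sum>k\<in>{m, m+1}. (2*m+1) choose k) \<le> (\<Sum>k\<le>2*m+1. (2*m+1) choose k)"
    by (rule sum_mono2) (use sub in auto)
  also have "\<dots> = 2^(2*m+1)" by (rule choose_row_sum)
  finally have "((2*m+1) choose m) + ((2*m+1) choose (m+1)) \<le> 2^(2*m+1)" by simp
  moreover have "(2*m+1) choose (m+1) = (2*m+1) choose m"
    using binomial_symmetric[of "m+1" "2*m+1"] by simp
  ultimately have "2 * ((2*m+1) choose m) \<le> 2 * 4^m"
    by (simp add: power_add power_mult)
  then show ?thesis by simp
qed

lemma prodB_dvd:
  "\<Prod>{p::nat. prime p \<and> m+1 < p \<and> p \<le> 2*m+1} dvd (2*m+1 choose m)"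
proof -
  let ?B = "{p::nat. prime p \<and> m+1 < p \<and> p \<le> 2*m+1}"
  have "?B \<subseteq> {m+1+1..2*m+1}" by auto
  then have d1: "\<Prod>?B dvd \<Prod>{m+1+1..2*m+1}"
    by (intro prod_dvd_prod_subset) auto
  have "\<Prod>{m+1+1..2*m+1} = fact (2*m+1) div fact (m+1)"
    by (rule fact_div_fact[symmetric]) simp
  also have "fact (2*m+1) = fact m * fact (m+1) * (2*m+1 choose m)"
    using binomial_fact_lemma[of m "2*m+1"] by (simp add: Suc_diff_le)
  also have "\<dots> div fact (m+1) = fact m * (2*m+1 choose m)"
    by (simp add: mult.commute mult.left_commute)
  finally have "\<Prod>?B dvd (2*m+1 choose m) * fact m" using d1 by (simp add: mult.commute)
  moreover have "coprime (\<Prod>?B) (fact m)"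
  proof (rule prod_coprime_left)
    fix p assume "p \<in> ?B"
    then have "prime p" "\<not> p \<le> m" by auto
    then show "coprime p (fact m)"
      using prime_imp_coprime prime_dvd_fact_iff by metis
  qed
  ultimately show ?thesis by (simp add: coprime_dvd_mult_left_iff)
qed

lemma primorial_le: "\<Prod>{p::nat. prime p \<and> p \<le> n} \<le> 4^n"
proof (induction n rule: less_induct)
  case (less n)
  consider "n \<le> 2" | "n > 2" "even n" | "n > 2" "odd n" by linarith
  then show ?case
  proof cases
    case 1
    then have "n = 0 \<or> n = 1 \<or> n = 2" by auto
    then show ?thesis
    proof (elim disjE)
      assume "n = 0"
      then have "{p::nat. prime p \<and> p \<le> n} = {}" by (auto dest: prime_gt_1_nat)
      then have "\<Prod>{p::nat. prime p \<and> p \<le> n} = 1" by (simp only: prod.empty)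
      then show ?thesis by simp
    next
      assume "n = 1"
      then have "{p::nat. prime p \<and> p \<le> n} = {}" by (auto dest: prime_gt_1_nat)
      then have "\<Prod>{p::nat. prime p \<and> p \<le> n} = 1" by (simp only: prod.empty)
      then show ?thesis by simp
    next
      assume "n = 2"
      then have "{p::nat. prime p \<and> p \<le> n} = {2}" by (auto dest: prime_gt_1_nat)
      then have "\<Prod>{p::nat. prime p \<and> p \<le> n} = 2" by simp
      then show ?thesis using \<open>n = 2\<close> by simp
    qed
  next
    case 2
    then have "\<not> prime n" using prime_odd_nat by blast
    have eqv: "p \<le> n \<longleftrightarrow> p \<le> n - 1" if "prime p" for p
    proof -
      have "p \<noteq> n" using that \<open>\<not> prime n\<close> by auto
      then show ?thesis using 2 by arith
    qed
    have "{p::nat. prime p \<and> p \<le> n} = {p. prime p \<and> p \<le> n - 1}"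
      using eqv by blast
    moreover have "\<Prod>{p::nat. prime p \<and> p \<le> n - 1} \<le> 4^(n-1)" using less 2 by simp
    moreover have "(4::nat)^(n-1) \<le> 4^n" by (intro power_increasing) auto
    ultimately show ?thesis by (metis order.trans)
  next
    case 3
    from 3(2) obtain m where m0: "n = 2*m+1" using oddE by blast
    with 3(1) have m: "n = 2*m+1" "m \<ge> 1" by auto
    let ?A = "{p::nat. prime p \<and> p \<le> m+1}"
    let ?B = "{p::nat. prime p \<and> m+1 < p \<and> p \<le> 2*m+1}"
    have un: "{p::nat. prime p \<and> p \<le> n} = ?A \<union> ?B" using m by auto
    have fA: "finite ?A" by (rule finite_subset[of _ "{..m+1}"]) auto
    have fB: "finite ?B" by (rule finite_subset[of _ "{..2*m+1}"]) auto
    have pr: "\<Prod>{p::nat. prime p \<and> p \<le> n} = \<Prod>?A * \<Prod>?B"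
      unfolding un by (rule prod.union_disjoint[OF fA fB]) auto
    have hA: "\<Prod>?A \<le> 4^(m+1)" using less.IH[of "m+1"] m by simp
    have hB: "\<Prod>?B \<le> 4^m"
    proof -
      have "\<Prod>?B \<le> (2*m+1 choose m)"
        by (rule dvd_imp_le[OF prodB_dvd]) simp
      then show ?thesis using central_binom_le[of m] by linarith
    qed
    have "\<Prod>{p::nat. prime p \<and> p \<le> n} \<le> 4^(m+1) * 4^m"
      unfolding pr by (rule mult_le_mono[OF hA hB])
    also have "\<dots> = 4^n" using m by (simp add: power_add[symmetric])
    finally show ?thesis .
  qed
qed

lemma exp_lower_taylor: fixes x :: real assumes "0 \<le> x"
  shows "(\<Sum>k<n. x^k / fact k) \<le> exp x"
proof -
  have s: "(\<lambda>k. x^k / fact k) sums exp x"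
    using exp_converges[of x] by (simp add: divide_inverse mult.commute)
  have "(\<Sum>k<n. x^k / fact k) \<le> (\<Sum>k. x^k / fact k)"
    by (rule sum_le_suminf[OF sums_summable[OF s]]) (use assms in auto)
  also have "(\<Sum>k. x^k / fact k) = exp x" using s sums_unique by metis
  finally show ?thesis .
qed

lemma exp1_lt: "exp (1::real) < 272/100"
proof -
  have "1 < ln (272/100::real)" by (rule ln_272_gt_1)
  then have "exp 1 < exp (ln (272/100::real))" by (simp only: exp_less_cancel_iff)
  also have "exp (ln (272/100::real)) = 272/100" by simp
  finally show ?thesis .
qed

lemma exp1_ge: "(27/10::real) \<le> exp 1"
  using exp_lower_taylor[of 1 6] by (simp add: numeral_eq_Suc fact_numeral)

lemma exp_nat_le: "exp (real k) \<le> (272/100::real)^k"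
proof -
  have "exp (real k) = exp 1 ^ k" by (simp add: exp_of_nat_mult[symmetric])
  also have "\<dots> \<le> (272/100)^k" using exp1_lt by (intro power_mono) auto
  finally show ?thesis .
qed

lemma exp_nat_ge: "(27/10::real)^k \<le> exp (real k)"
proof -
  have "(27/10::real)^k \<le> exp 1 ^ k" using exp1_ge by (intro power_mono) auto
  also have "\<dots> = exp (real k)" by (simp add: exp_of_nat_mult[symmetric])
  finally show ?thesis .
qed

lemma ln_ge_1m: fixes y :: real assumes "0 < y" shows "1 - 1/y \<le> ln y"
proof -
  have "ln (1/y) \<le> 1/y - 1" by (rule ln_le_minus_one) (use assms in simp)
  then show ?thesis using assms by (simp add: ln_div)
qed

lemma ln_ge_shift: fixes y :: real assumes "0 < y"
  shows "real k + 1 - (272/100)^k / y \<le> ln y"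
proof -
  have "1 - exp (real k) / y \<le> ln (y / exp (real k))"
    using ln_ge_1m[of "y / exp (real k)"] assms by simp
  also have "\<dots> = ln y - real k" using assms by (simp add: ln_div)
  finally have "real k + 1 - exp (real k) / y \<le> ln y" by simp
  moreover have "exp (real k) / y \<le> (272/100)^k / y"
    using exp_nat_le[of k] assms by (simp add: divide_right_mono)
  ultimately show ?thesis by linarith
qed

lemma ln_le_of_exp: fixes x y :: real assumes "0 < x" "x \<le> exp y" shows "ln x \<le> y"
  using assms by (metis ln_exp ln_le_cancel_iff exp_gt_zero)

lemma ln4_le: "ln (4::real) \<le> 139/100"
proof -
  have "(4::real) \<le> (\<Sum>k<8. (139/100)^k / fact k)"
    by (simp add: numeral_eq_Suc fact_numeral)
  also have "\<dots> \<le> exp (139/100)" by (rule exp_lower_taylor) simp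
  finally show ?thesis by (intro ln_le_of_exp) simp_all
qed

lemma ln20_le: "ln (20::real) \<le> 3"
proof -
  have "(20::real) \<le> (\<Sum>k<10. 3^k / fact k)"
    by (simp add: numeral_eq_Suc fact_numeral)
  also have "\<dots> \<le> exp 3" by (rule exp_lower_taylor) simp
  finally show ?thesis by (intro ln_le_of_exp) simp_all
qed

lemma ln3_le: "ln (3::real) \<le> 11/10"
proof -
  have "(3::real) \<le> (\<Sum>k<7. (11/10)^k / fact k)"
    by (simp add: numeral_eq_Suc fact_numeral)
  also have "\<dots> \<le> exp (11/10)" by (rule exp_lower_taylor) simp
  finally show ?thesis by (intro ln_le_of_exp) simp_all
qed

lemma exp_m066: "exp (-(66/100)::real) \<le> 52/100"
proof -
  have "(100/52::real) \<le> (\<Sum>k<5. (66/100)^k / fact k)"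
    by (simp add: numeral_eq_Suc fact_numeral)
  also have "\<dots> \<le> exp (66/100)" by (rule exp_lower_taylor) simp
  finally have "100/52 \<le> exp (66/100::real)" .
  then have "1 / exp (66/100::real) \<le> 52/100" by (simp add: field_simps)
  then show ?thesis by (simp add: exp_minus field_simps)
qed

lemma exp_m07134: "exp (-(7134/10000)::real) \<le> 1/2"
proof -
  have "(2::real) \<le> (\<Sum>k<5. (7134/10000)^k / fact k)"
    by (simp add: numeral_eq_Suc fact_numeral)
  also have "\<dots> \<le> exp (7134/10000)" by (rule exp_lower_taylor) simp
  finally have "2 \<le> exp (7134/10000::real)" .
  then have "1 / exp (7134/10000::real) \<le> 1/2" by (simp add: field_simps)
  then show ?thesis by (simp add: exp_minus field_simps)
qed

definition GG :: "real \<Rightarrow> real" where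
  "GG x = x * ln x + x * ln (ln x) - 2*x + 18"

lemma D_bound:
  fixes x :: real assumes x: "3 \<le> x"
  shows "GG x - GG (x-1) \<le> ln x + ln (ln x) - 1 + 1 / ln (x-1)"
proof -
  define y where "y = x - 1"
  have y2: "2 \<le> y" and xy: "x = y + 1" using x by (simp_all add: y_def)
  have lny: "0 < ln y" using y2 by simp
  have lnxy: "ln y < ln x" using y2 xy by simp
  have h1: "ln x - ln y \<le> 1 / y"
  proof -
    have "ln (x / y) \<le> x / y - 1" using y2 xy by (intro ln_le_minus_one) simp
    also have "x / y - 1 = 1 / y" using y2 xy by (simp add: field_simps)
    finally show ?thesis using y2 xy by (simp add: ln_div)
  qed
  have h2: "ln (ln x) - ln (ln y) \<le> (ln x - ln y) / ln y"
  proof -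
    have "ln (ln x / ln y) \<le> ln x / ln y - 1" using lny lnxy by (intro ln_le_minus_one) simp
    also have "ln x / ln y - 1 = (ln x - ln y) / ln y" using lny by (simp add: field_simps)
    finally show ?thesis using lny lnxy by (simp add: ln_div)
  qed
  have a1: "y * (ln x - ln y) \<le> 1" using h1 y2 by (simp add: field_simps)
  have "y * (ln (ln x) - ln (ln y)) \<le> y * ((ln x - ln y) / ln y)"
    using h2 y2 by (intro mult_left_mono) simp_all
  also have "\<dots> = (y * (ln x - ln y)) / ln y" by simp
  also have "\<dots> \<le> 1 / ln y" using a1 lny by (intro divide_right_mono) simp_all
  finally have a2: "y * (ln (ln x) - ln (ln y)) \<le> 1 / ln y" .
  have "GG x - GG (x-1) = ln x + y * (ln x - ln y) + ln (ln x) + y * (ln (ln x) - ln (ln y)) - 2"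
    unfolding GG_def y_def[symmetric] using xy by (simp add: algebra_simps)
  also have "\<dots> \<le> ln x + 1 + ln (ln x) + 1 / ln y - 2" using a1 a2 by linarith
  finally show ?thesis by (simp add: y_def)
qed

lemma ln_ge_of_exp: fixes x y :: real assumes "exp y \<le> x" shows "y \<le> ln x"
proof -
  have "0 < x" using assms exp_gt_zero[of y] by linarith
  then have "ln (exp y) \<le> ln x" using assms by (subst ln_le_cancel_iff) auto
  then show ?thesis by simp
qed

lemma ln21: "3 \<le> ln (21::real)"
proof -
  have "exp (real 3) \<le> (272/100::real)^3" by (rule exp_nat_le)
  moreover have "(272/100::real)^3 \<le> 21" by (simp add: power_divide)
  ultimately have "exp 3 \<le> (21::real)" by simp
  then show ?thesis by (rule ln_ge_of_exp)
qed

lemma ln20_ge: "299/100 \<le> ln (20::real)"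
proof -
  have "real 3 + 1 - (272/100)^3 / 20 \<le> ln (20::real)" by (rule ln_ge_shift) simp
  moreover have "(299/100::real) \<le> real 3 + 1 - (272/100)^3 / 20" by (simp add: power_divide)
  ultimately show ?thesis by linarith
qed

lemma ln40_ge: "349/100 \<le> ln (40::real)"
proof -
  have "real 3 + 1 - (272/100)^3 / 40 \<le> ln (40::real)" by (rule ln_ge_shift) simp
  moreover have "(349/100::real) \<le> real 3 + 1 - (272/100)^3 / 40" by (simp add: power_divide)
  ultimately show ?thesis by linarith
qed

lemma ln349_ge: "122/100 \<le> ln (349/100::real)"
proof -
  have "real 1 + 1 - (272/100)^1 / (349/100) \<le> ln (349/100::real)" by (rule ln_ge_shift) simp
  moreover have "(122/100::real) \<le> real 1 + 1 - (272/100)^1 / (349/100)" by simp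
  ultimately show ?thesis by linarith
qed

lemma ln_ge_1_of: fixes L :: real assumes "3 \<le> L" shows "1 \<le> ln L"
proof -
  have "exp 1 \<le> L" using exp1_lt assms by linarith
  then show ?thesis by (rule ln_ge_of_exp)
qed

lemma key_ineq:
  fixes x :: real assumes x: "21 \<le> x"
  shows "ln 4 * ln x * exp (1 / ln (x-1) - 1) \<le> ln x + ln (ln x) - 2 + 18 / x"
proof -
  define L where "L = ln x"
  have "ln 21 \<le> L" using x unfolding L_def by (subst ln_le_cancel_iff) simp_all
  then have L3: "3 \<le> L" using ln21 by linarith
  have lnL1: "1 \<le> ln L" using ln_ge_1_of L3 .
  have l4: "ln 4 \<le> (139/100::real)" by (rule ln4_le)
  have l4p: "0 \<le> ln (4::real)" by simp
  show ?thesis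
  proof (cases "x \<le> 41")
    case True
    have "ln 20 \<le> ln (x-1)" using x by (subst ln_le_cancel_iff) simp_all
    then have lx1: "299/100 \<le> ln (x-1)" using ln20_ge by linarith
    then have "1 / ln (x-1) \<le> 1 / (299/100)" by (intro divide_left_mono) simp_all
    then have "1 / ln (x-1) - 1 \<le> - (66/100)" by simp
    then have "exp (1 / ln (x-1) - 1) \<le> exp (- (66/100))" by simp
    then have E: "exp (1 / ln (x-1) - 1) \<le> 52/100" using exp_m066 by linarith
    have "ln 4 * L * exp (1 / ln (x-1) - 1) \<le> (139/100) * L * (52/100)"
      using l4 L3 E l4p by (intro mult_mono) simp_all
    moreover have "18 / 41 \<le> 18 / x" using True x by (intro divide_left_mono) simp_all
    ultimately show ?thesis unfolding L_def[symmetric] using L3 lnL1 by linarith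
  next
    case False
    have "ln 40 \<le> ln (x-1)" using False by (subst ln_le_cancel_iff) simp_all
    then have lx1: "349/100 \<le> ln (x-1)" using ln40_ge by linarith
    then have "1 / ln (x-1) \<le> 1 / (349/100)" by (intro divide_left_mono) simp_all
    then have "1 / ln (x-1) - 1 \<le> - (7134/10000)" by simp
    then have "exp (1 / ln (x-1) - 1) \<le> exp (- (7134/10000))" by simp
    then have E: "exp (1 / ln (x-1) - 1) \<le> 1/2" using exp_m07134 by linarith
    have "ln (x-1) \<le> L" unfolding L_def using False by simp
    then have L349: "349/100 \<le> L" using lx1 by linarith
    then have "ln (349/100) \<le> ln L" by simp
    then have lnL: "122/100 \<le> ln L" using ln349_ge by linarith
    have "ln 4 * L * exp (1 / ln (x-1) - 1) \<le> (139/100) * L * (1/2)"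
      using l4 L3 E l4p by (intro mult_mono) simp_all
    moreover have "0 \<le> 18 / x" using x by simp
    ultimately show ?thesis unfolding L_def[symmetric] using L349 lnL by linarith
  qed
qed

lemma GG_pos: fixes x :: real assumes "20 \<le> x" shows "18 \<le> GG x"
proof -
  have "ln 20 \<le> ln x" using assms by simp
  then have L: "299/100 \<le> ln x" using ln20_ge by linarith
  then have l0: "0 \<le> ln (ln x)" by simp
  have h: "0 \<le> ln x + ln (ln x) - 2" using L l0 by linarith
  have "0 \<le> x * (ln x + ln (ln x) - 2)" using assms h by simp
  then show ?thesis unfolding GG_def by (simp add: algebra_simps)
qed

lemma step_cond:
  fixes x :: real assumes x: "21 \<le> x"
  shows "GG x - ln (GG x) + ln (ln 4) \<le> GG (x-1)"
proof -
  define L where "L = ln x"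
  define u where "u = L + ln L - 2 + 18 / x"
  have "ln 21 \<le> L" using x unfolding L_def by (subst ln_le_cancel_iff) simp_all
  then have L3: "3 \<le> L" using ln21 by linarith
  have lnL1: "1 \<le> ln L" using ln_ge_1_of L3 .
  have "0 \<le> 18 / x" using x by simp
  then have up: "0 < u" unfolding u_def using L3 lnL1 by linarith
  have Gx: "GG x = x * u" unfolding GG_def u_def L_def using x by (simp add: field_simps)
  have lnG: "ln (GG x) = L + ln u" unfolding Gx L_def using x up by (simp add: ln_mult)
  have K: "ln 4 * L * exp (1 / ln (x-1) - 1) \<le> u" unfolding L_def u_def by (rule key_ineq[OF x])
  have pos: "0 < ln 4 * L * exp (1 / ln (x-1) - 1)" using L3 by simp
  have "ln (ln 4 * L * exp (1 / ln (x-1) - 1)) \<le> ln u" using K pos by simp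
  moreover have "ln (ln 4 * L * exp (1 / ln (x-1) - 1)) = ln (ln 4) + ln L + (1 / ln (x-1) - 1)"
    using L3 by (simp add: ln_mult)
  ultimately have A: "ln (ln 4) + ln L + 1 / ln (x-1) - 1 \<le> ln u" by simp
  have "GG x - GG (x-1) \<le> L + ln L - 1 + 1 / ln (x-1)" unfolding L_def using D_bound x by simp
  then show ?thesis using A lnG by linarith
qed

lemma g_mono: fixes a b :: real assumes "1 < a" "1 \<le> b" "b - ln b \<le> a - ln a" shows "b \<le> a"
proof (rule ccontr)
  assume "\<not> b \<le> a"
  then have ab: "a < b" by simp
  have "ln (b / a) \<le> b / a - 1" using assms ab by (intro ln_le_minus_one) simp
  also have "b / a - 1 = (b - a) / a" using assms by (simp add: field_simps)
  also have "\<dots> < b - a"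
  proof -
    have "(b - a) * 1 < (b - a) * a" using assms ab by (intro mult_strict_left_mono) simp_all
    then show ?thesis using assms by (simp add: pos_divide_less_eq)
  qed
  finally have "ln b - ln a < b - a" using assms by (simp add: ln_div)
  then show False using assms(3) by linarith
qed

lemma np_prime: "prime (nth_prime j)"
  unfolding nth_prime_def using enumerate_in_set[OF inf_primes] by simp

lemma np_mono: assumes "1 \<le> i" "i < j" shows "nth_prime i < nth_prime j"
proof -
  have "i - 1 < j - 1" using assms by simp
  then show ?thesis unfolding nth_prime_def using enumerate_mono[OF _ inf_primes] by blast
qed

lemma np_mono_le: assumes "1 \<le> i" "i \<le> j" shows "nth_prime i \<le> nth_prime j"
  using np_mono[OF assms(1)] assms(2) by (cases "i = j") (auto simp: order_less_imp_le)

lemma np_inj: "inj_on nth_prime {1..n}"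
proof (rule inj_onI)
  fix i j assume i: "i \<in> {1..n}" and j: "j \<in> {1..n}" and e: "nth_prime i = nth_prime j"
  show "i = j"
  proof (rule ccontr)
    assume "i \<noteq> j"
    then have "i < j \<or> j < i" by arith
    then show False using np_mono[of i j] np_mono[of j i] i j e by auto
  qed
qed

definition Qn :: "nat \<Rightarrow> nat" where "Qn n = (\<Prod>j=1..n. nth_prime j)"

lemma Qn_pos: "0 < Qn n"
  unfolding Qn_def using np_prime prime_gt_0_nat by (intro prod_pos) auto

lemma Qn_le: assumes "1 \<le> n" shows "Qn n \<le> 4 ^ nth_prime n"
proof -
  have "Qn n = \<Prod>(nth_prime ` {1..n})"
    unfolding Qn_def using prod.reindex[OF np_inj[of n], of "\<lambda>x. x"] by (simp add: comp_def)
  also have "\<Prod>(nth_prime ` {1..n}) dvd \<Prod>{p. prime p \<and> p \<le> nth_prime n}"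
  proof (rule prod_dvd_prod_subset)
    show "finite {p. prime p \<and> p \<le> nth_prime n}"
      by (rule finite_subset[of _ "{..nth_prime n}"]) auto
    show "nth_prime ` {1..n} \<subseteq> {p. prime p \<and> p \<le> nth_prime n}"
      using np_prime np_mono_le by auto
  qed
  then have "\<Prod>(nth_prime ` {1..n}) \<le> \<Prod>{p. prime p \<and> p \<le> nth_prime n}"
    by (rule dvd_imp_le) (auto intro!: prod_pos dest: prime_gt_0_nat)
  also have "\<dots> \<le> 4 ^ nth_prime n" by (rule primorial_le)
  finally show ?thesis .
qed

lemma Qn_Suc: "Qn (Suc n) = Qn n * nth_prime (Suc n)"
  unfolding Qn_def by (simp add: prod.cl_ivl_Suc)

definition Sr :: "nat \<Rightarrow> real" where "Sr n = ln (real (Qn n))"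

lemma Sr_Suc: "Sr (Suc n) = Sr n + ln (real (nth_prime (Suc n)))"
proof -
  have "0 < nth_prime (Suc n)" using np_prime prime_gt_0_nat by blast
  then show ?thesis unfolding Sr_def Qn_Suc using Qn_pos[of n] by (simp add: ln_mult)
qed

lemma Sr_le: assumes "1 \<le> n" shows "Sr n \<le> ln 4 * real (nth_prime n)"
proof -
  have "real (Qn n) \<le> real (4 ^ nth_prime n)" using Qn_le[OF assms] by linarith
  then have "Sr n \<le> ln (real (4 ^ nth_prime n))" unfolding Sr_def using Qn_pos[of n]
    by (subst ln_le_cancel_iff) auto
  also have "\<dots> = real (nth_prime n) * ln 4" by (simp add: ln_realpow)
  finally show ?thesis by (simp add: mult.commute)
qed

lemma step:
  assumes n: "21 \<le> n" and IH: "GG (real n - 1) \<le> Sr (n - 1)"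
  shows "GG (real n) \<le> Sr n"
proof -
  obtain m where m: "n = Suc m" using n by (cases n) auto
  have rm: "real m = real n - 1" using m by simp
  define p where "p = real (nth_prime n)"
  have p1: "1 \<le> p" unfolding p_def using np_prime[of n] prime_ge_1_nat by simp
  have S: "Sr n = Sr m + ln p" unfolding p_def m by (rule Sr_Suc)
  have SL: "Sr n \<le> ln 4 * p" unfolding p_def using Sr_le n by simp
  have IH': "GG (real n - 1) \<le> Sr m" using IH m by simp
  have G18: "18 \<le> GG (real n - 1)" using n by (intro GG_pos) simp
  have lnp: "0 \<le> ln p" using p1 by simp
  have Sgt: "1 < Sr n" using S IH' G18 lnp by linarith
  have "ln (Sr n) \<le> ln (ln 4 * p)" using SL Sgt by (subst ln_le_cancel_iff) auto
  also have "\<dots> = ln (ln 4) + ln p" using p1 by (simp add: ln_mult)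
  finally have lnS: "ln (Sr n) \<le> ln (ln 4) + ln p" .
  have sc: "GG (real n) - ln (GG (real n)) + ln (ln 4) \<le> GG (real n - 1)"
    using n by (intro step_cond) simp
  have Gn: "1 \<le> GG (real n)" using GG_pos[of "real n"] n by simp
  have "GG (real n) - ln (GG (real n)) \<le> Sr n - ln (Sr n)"
    using sc IH' S lnS by linarith
  then show ?thesis using g_mono[OF Sgt Gn] by simp
qed

lemma Qn_next: "Qn k = a \<Longrightarrow> nth_prime k1 = b \<Longrightarrow> k1 = k + 1 \<Longrightarrow> Qn k1 = a * b"
  using Qn_Suc[of k] by simp

lemma Q1: "Qn 1 = 2" unfolding Qn_def using nth_prime_1 by simp
lemma Q2: "Qn 2 = 6" using Qn_next[OF Q1 np2] by simp
lemma Q3: "Qn 3 = 30" using Qn_next[OF Q2 np3] by simp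
lemma Q4: "Qn 4 = 210" using Qn_next[OF Q3 np4] by simp
lemma Q5: "Qn 5 = 2310" using Qn_next[OF Q4 np5] by simp
lemma Q6: "Qn 6 = 30030" using Qn_next[OF Q5 np6] by simp
lemma Q7: "Qn 7 = 510510" using Qn_next[OF Q6 np7] by simp
lemma Q8: "Qn 8 = 9699690" using Qn_next[OF Q7 np8] by simp
lemma Q9: "Qn 9 = 223092870" using Qn_next[OF Q8 np9] by simp
lemma Q10: "Qn 10 = 6469693230" using Qn_next[OF Q9 np10] by simp
lemma Q11: "Qn 11 = 200560490130" using Qn_next[OF Q10 np11] by simp
lemma Q12: "Qn 12 = 7420738134810" using Qn_next[OF Q11 np12] by simp
lemma Q13: "Qn 13 = 304250263527210" using Qn_next[OF Q12 np13] by simp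
lemma Q14: "Qn 14 = 13082761331670030" using Qn_next[OF Q13 np14] by simp
lemma Q15: "Qn 15 = 614889782588491410" using Qn_next[OF Q14 np15] by simp
lemma Q16: "Qn 16 = 32589158477190044730" using Qn_next[OF Q15 np16] by simp
lemma Q17: "Qn 17 = 1922760350154212639070" using Qn_next[OF Q16 np17] by simp
lemma Q18: "Qn 18 = 117288381359406970983270" using Qn_next[OF Q17 np18] by simp
lemma Q19: "Qn 19 = 7858321551080267055879090" using Qn_next[OF Q18 np19] by simp
lemma Q20: "Qn 20 = 557940830126698960967415390" using Qn_next[OF Q19 np20] by simp

lemma base20: "GG (real 20) \<le> Sr 20"
proof -
  have l20: "ln (20::real) \<le> 3" by (rule ln20_le)
  have "ln (ln (20::real)) \<le> ln 3" using l20 ln20_ge by (subst ln_le_cancel_iff) auto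
  then have ll: "ln (ln (20::real)) \<le> 11/10" using ln3_le by linarith
  have G: "GG (real 20) \<le> 60" unfolding GG_def using l20 ll by simp
  have "exp (real 60) \<le> (272/100::real)^60" by (rule exp_nat_le)
  also have "\<dots> \<le> real (Qn 20)" unfolding Q20 by (simp add: power_divide)
  finally have "60 \<le> Sr 20" unfolding Sr_def by (intro ln_ge_of_exp) simp
  then show ?thesis using G by linarith
qed

lemma big: assumes "20 \<le> n" shows "GG (real n) \<le> Sr n"
  using assms
proof (induction n rule: nat_induct_at_least)
  case base
  then show ?case using base20 by simp
next
  case (Suc n)
  show ?case
    by (rule step) (use Suc in simp_all)
qed

lemma Qn_split: assumes "4 \<le> n" shows "real (Qn n) = 210 * (\<Prod>j=5..n. real (nth_prime j))"
proof -
  have un: "{1..n} = {1..4} \<union> {5..n}" using assms by auto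
  have "Qn n = (\<Prod>j=1..4. nth_prime j) * (\<Prod>j=5..n. nth_prime j)"
    unfolding Qn_def un by (rule prod.union_disjoint) auto
  also have "(\<Prod>j=1..4. nth_prime j) = 210" using Q4 unfolding Qn_def by simp
  finally show ?thesis by simp
qed

lemma ln210: "ln (210::real) < 20"
proof -
  have "(210::real) < (\<Sum>k<3. 20^k / fact k)" by (simp add: numeral_eq_Suc fact_numeral)
  also have "\<dots> \<le> exp 20" by (rule exp_lower_taylor) simp
  finally have "210 < exp (20::real)" .
  then have "ln 210 < ln (exp (20::real))" by (subst ln_less_cancel_iff) auto
  then show ?thesis by simp
qed

lemma big_case: assumes n: "20 \<le> n"
  shows "(\<Prod>j = 5..n. real (nth_prime j)) > (real n * ln (real n)) ^ n * exp (- 2 * real n - 2)"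
proof -
  define x where "x = real n"
  have x20: "20 \<le> x" using n by (simp add: x_def)
  have L: "0 < ln x" using x20 by simp
  have xL: "0 < x * ln x" using x20 L by simp
  have "(x * ln x) ^ n = exp (real n * ln (x * ln x))"
    using xL by (simp add: exp_of_nat_mult exp_ln)
  also have "real n * ln (x * ln x) = x * ln x + x * ln (ln x)"
    using x20 L by (simp add: ln_mult x_def algebra_simps)
  finally have "(x * ln x) ^ n * exp (- 2 * x - 2) = exp (x * ln x + x * ln (ln x) + (- 2 * x - 2))"
    by (simp add: exp_add)
  also have "x * ln x + x * ln (ln x) + (- 2 * x - 2) = GG x - 20" unfolding GG_def by simp
  finally have R: "(x * ln x) ^ n * exp (- 2 * x - 2) = exp (GG x - 20)" .
  have "GG x \<le> Sr n" unfolding x_def by (rule big[OF n])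
  then have "GG x - 20 < Sr n - ln 210" using ln210 by linarith
  then have "exp (GG x - 20) < exp (Sr n - ln 210)" by simp
  also have "exp (Sr n - ln 210) = real (Qn n) / 210"
    unfolding Sr_def using Qn_pos[of n] by (simp add: exp_diff)
  also have "\<dots> = (\<Prod>j = 5..n. real (nth_prime j))" using Qn_split n by simp
  finally show ?thesis using R unfolding x_def by simp
qed

lemma small_gen:
  fixes r P :: real
  assumes "1 \<le> n" "ln (real n) \<le> r" "(real n * r) ^ n < P * (27/10) ^ (2*n+2)"
  shows "(real n * ln (real n)) ^ n * exp (- 2 * real n - 2) < P"
proof -
  define x where "x = real n"
  have x1: "1 \<le> x" using assms by (simp add: x_def)
  have l0: "0 \<le> ln x" using x1 by simp
  have A: "(x * ln x) ^ n \<le> (x * r) ^ n"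
    using assms(2) x1 l0 unfolding x_def[symmetric] by (intro power_mono mult_left_mono) simp_all
  have "(27/10::real) ^ (2*n+2) \<le> exp (real (2*n+2))" by (rule exp_nat_ge)
  also have "real (2*n+2) = 2 * x + 2" by (simp add: x_def)
  finally have B: "(27/10::real) ^ (2*n+2) \<le> exp (2 * x + 2)" .
  have e0: "- 2 * x - 2 = -(2 * x + 2)" by simp
  have e: "exp (- 2 * x - 2) = 1 / exp (2 * x + 2)" unfolding e0 exp_minus by (simp add: inverse_eq_divide)
  have "(x * ln x) ^ n * exp (- 2 * x - 2) \<le> (x * r) ^ n / exp (2 * x + 2)"
    unfolding e using A by (simp add: divide_right_mono)
  also have "\<dots> \<le> (x * r) ^ n / (27/10) ^ (2*n+2)"
  proof (rule divide_left_mono)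
    have "0 \<le> r" using l0 assms(2) unfolding x_def by linarith
    then show "0 \<le> (x * r) ^ n" using x1 by simp
  qed (use B in simp_all)
  also have "\<dots> < P" using assms(3) unfolding x_def[symmetric] by (simp add: divide_less_eq)
  finally show ?thesis unfolding x_def .
qed

lemma small_2: "(\<Prod>j = 5..2. real (nth_prime j)) > (real 2 * ln (real 2)) ^ 2 * exp (- 2 * real 2 - 2)"
proof -
  have P: "(\<Prod>j = 5..2. real (nth_prime j)) = 1" by simp
  have "ln (real 2) \<le> ln (4::real)" by simp
  then have l: "ln (real 2) \<le> 139/100" using ln4_le by linarith
  show ?thesis unfolding P by (rule small_gen[OF _ l]) (simp_all add: power_divide)
qed

lemma small_3: "(\<Prod>j = 5..3. real (nth_prime j)) > (real 3 * ln (real 3)) ^ 3 * exp (- 2 * real 3 - 2)"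
proof -
  have P: "(\<Prod>j = 5..3. real (nth_prime j)) = 1" by simp
  have "ln (real 3) \<le> ln (4::real)" by simp
  then have l: "ln (real 3) \<le> 139/100" using ln4_le by linarith
  show ?thesis unfolding P by (rule small_gen[OF _ l]) (simp_all add: power_divide)
qed

lemma small_4: "(\<Prod>j = 5..4. real (nth_prime j)) > (real 4 * ln (real 4)) ^ 4 * exp (- 2 * real 4 - 2)"
proof -
  have P: "(\<Prod>j = 5..4. real (nth_prime j)) = 1" using Qn_split[of 4] Q4 by simp
  have "ln (real 4) \<le> ln (4::real)" by simp
  then have l: "ln (real 4) \<le> 139/100" using ln4_le by linarith
  show ?thesis unfolding P by (rule small_gen[OF _ l]) (simp_all add: power_divide)
qed

lemma small_5: "(\<Prod>j = 5..5. real (nth_prime j)) > (real 5 * ln (real 5)) ^ 5 * exp (- 2 * real 5 - 2)"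
proof -
  have P: "(\<Prod>j = 5..5. real (nth_prime j)) = 11" using Qn_split[of 5] Q5 by simp
  have "ln (real 5) \<le> ln (20::real)" by simp
  then have l: "ln (real 5) \<le> 3" using ln20_le by linarith
  show ?thesis unfolding P by (rule small_gen[OF _ l]) (simp_all add: power_divide)
qed

lemma small_6: "(\<Prod>j = 5..6. real (nth_prime j)) > (real 6 * ln (real 6)) ^ 6 * exp (- 2 * real 6 - 2)"
proof -
  have P: "(\<Prod>j = 5..6. real (nth_prime j)) = 143" using Qn_split[of 6] Q6 by simp
  have "ln (real 6) \<le> ln (20::real)" by simp
  then have l: "ln (real 6) \<le> 3" using ln20_le by linarith
  show ?thesis unfolding P by (rule small_gen[OF _ l]) (simp_all add: power_divide)
qed

lemma small_7: "(\<Prod>j = 5..7. real (nth_prime j)) > (real 7 * ln (real 7)) ^ 7 * exp (- 2 * real 7 - 2)"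
proof -
  have P: "(\<Prod>j = 5..7. real (nth_prime j)) = 2431" using Qn_split[of 7] Q7 by simp
  have "ln (real 7) \<le> ln (20::real)" by simp
  then have l: "ln (real 7) \<le> 3" using ln20_le by linarith
  show ?thesis unfolding P by (rule small_gen[OF _ l]) (simp_all add: power_divide)
qed

lemma small_8: "(\<Prod>j = 5..8. real (nth_prime j)) > (real 8 * ln (real 8)) ^ 8 * exp (- 2 * real 8 - 2)"
proof -
  have P: "(\<Prod>j = 5..8. real (nth_prime j)) = 46189" using Qn_split[of 8] Q8 by simp
  have "ln (real 8) \<le> ln (20::real)" by simp
  then have l: "ln (real 8) \<le> 3" using ln20_le by linarith
  show ?thesis unfolding P by (rule small_gen[OF _ l]) (simp_all add: power_divide)
qed

lemma small_9: "(\<Prod>j = 5..9. real (nth_prime j)) > (real 9 * ln (real 9)) ^ 9 * exp (- 2 * real 9 - 2)"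
proof -
  have P: "(\<Prod>j = 5..9. real (nth_prime j)) = 1062347" using Qn_split[of 9] Q9 by simp
  have "ln (real 9) \<le> ln (20::real)" by simp
  then have l: "ln (real 9) \<le> 3" using ln20_le by linarith
  show ?thesis unfolding P by (rule small_gen[OF _ l]) (simp_all add: power_divide)
qed

lemma small_10: "(\<Prod>j = 5..10. real (nth_prime j)) > (real 10 * ln (real 10)) ^ 10 * exp (- 2 * real 10 - 2)"
proof -
  have P: "(\<Prod>j = 5..10. real (nth_prime j)) = 30808063" using Qn_split[of 10] Q10 by simp
  have "ln (real 10) \<le> ln (20::real)" by simp
  then have l: "ln (real 10) \<le> 3" using ln20_le by linarith
  show ?thesis unfolding P by (rule small_gen[OF _ l]) (simp_all add: power_divide)
qed

lemma small_11: "(\<Prod>j = 5..11. real (nth_prime j)) > (real 11 * ln (real 11)) ^ 11 * exp (- 2 * real 11 - 2)"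
proof -
  have P: "(\<Prod>j = 5..11. real (nth_prime j)) = 955049953" using Qn_split[of 11] Q11 by simp
  have "ln (real 11) \<le> ln (20::real)" by simp
  then have l: "ln (real 11) \<le> 3" using ln20_le by linarith
  show ?thesis unfolding P by (rule small_gen[OF _ l]) (simp_all add: power_divide)
qed

lemma small_12: "(\<Prod>j = 5..12. real (nth_prime j)) > (real 12 * ln (real 12)) ^ 12 * exp (- 2 * real 12 - 2)"
proof -
  have P: "(\<Prod>j = 5..12. real (nth_prime j)) = 35336848261" using Qn_split[of 12] Q12 by simp
  have "ln (real 12) \<le> ln (20::real)" by simp
  then have l: "ln (real 12) \<le> 3" using ln20_le by linarith
  show ?thesis unfolding P by (rule small_gen[OF _ l]) (simp_all add: power_divide)
qed

lemma small_13: "(\<Prod>j = 5..13. real (nth_prime j)) > (real 13 * ln (real 13)) ^ 13 * exp (- 2 * real 13 - 2)"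
proof -
  have P: "(\<Prod>j = 5..13. real (nth_prime j)) = 1448810778701" using Qn_split[of 13] Q13 by simp
  have "ln (real 13) \<le> ln (20::real)" by simp
  then have l: "ln (real 13) \<le> 3" using ln20_le by linarith
  show ?thesis unfolding P by (rule small_gen[OF _ l]) (simp_all add: power_divide)
qed

lemma small_14: "(\<Prod>j = 5..14. real (nth_prime j)) > (real 14 * ln (real 14)) ^ 14 * exp (- 2 * real 14 - 2)"
proof -
  have P: "(\<Prod>j = 5..14. real (nth_prime j)) = 62298863484143" using Qn_split[of 14] Q14 by simp
  have "ln (real 14) \<le> ln (20::real)" by simp
  then have l: "ln (real 14) \<le> 3" using ln20_le by linarith
  show ?thesis unfolding P by (rule small_gen[OF _ l]) (simp_all add: power_divide)
qed

lemma small_15: "(\<Prod>j = 5..15. real (nth_prime j)) > (real 15 * ln (real 15)) ^ 15 * exp (- 2 * real 15 - 2)"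
proof -
  have P: "(\<Prod>j = 5..15. real (nth_prime j)) = 2928046583754721" using Qn_split[of 15] Q15 by simp
  have "ln (real 15) \<le> ln (20::real)" by simp
  then have l: "ln (real 15) \<le> 3" using ln20_le by linarith
  show ?thesis unfolding P by (rule small_gen[OF _ l]) (simp_all add: power_divide)
qed

lemma small_16: "(\<Prod>j = 5..16. real (nth_prime j)) > (real 16 * ln (real 16)) ^ 16 * exp (- 2 * real 16 - 2)"
proof -
  have P: "(\<Prod>j = 5..16. real (nth_prime j)) = 155186468939000213" using Qn_split[of 16] Q16 by simp
  have "ln (real 16) \<le> ln (20::real)" by simp
  then have l: "ln (real 16) \<le> 3" using ln20_le by linarith
  show ?thesis unfolding P by (rule small_gen[OF _ l]) (simp_all add: power_divide)
qed

lemma small_17: "(\<Prod>j = 5..17. real (nth_prime j)) > (real 17 * ln (real 17)) ^ 17 * exp (- 2 * real 17 - 2)"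
proof -
  have P: "(\<Prod>j = 5..17. real (nth_prime j)) = 9156001667401012567" using Qn_split[of 17] Q17 by simp
  have "ln (real 17) \<le> ln (20::real)" by simp
  then have l: "ln (real 17) \<le> 3" using ln20_le by linarith
  show ?thesis unfolding P by (rule small_gen[OF _ l]) (simp_all add: power_divide)
qed

lemma small_18: "(\<Prod>j = 5..18. real (nth_prime j)) > (real 18 * ln (real 18)) ^ 18 * exp (- 2 * real 18 - 2)"
proof -
  have P: "(\<Prod>j = 5..18. real (nth_prime j)) = 558516101711461766587" using Qn_split[of 18] Q18 by simp
  have "ln (real 18) \<le> ln (20::real)" by simp
  then have l: "ln (real 18) \<le> 3" using ln20_le by linarith
  show ?thesis unfolding P by (rule small_gen[OF _ l]) (simp_all add: power_divide)
qed

lemma small_19: "(\<Prod>j = 5..19. real (nth_prime j)) > (real 19 * ln (real 19)) ^ 19 * exp (- 2 * real 19 - 2)"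
proof -
  have P: "(\<Prod>j = 5..19. real (nth_prime j)) = 37420578814667938361329" using Qn_split[of 19] Q19 by simp
  have "ln (real 19) \<le> ln (20::real)" by simp
  then have l: "ln (real 19) \<le> 3" using ln20_le by linarith
  show ?thesis unfolding P by (rule small_gen[OF _ l]) (simp_all add: power_divide)
qed

theorem lemma2p11:
  fixes n :: nat
  assumes "n \<ge> 2"
  shows "(\<Prod>j = 5..n. real (nth_prime j)) > (real n * ln (real n)) ^ n * exp (- 2 * real n - 2)"
proof (cases "20 \<le> n")
  case True
  then show ?thesis by (rule big_case)
next
  case False
  then have "n = 2 \<or> n = 3 \<or> n = 4 \<or> n = 5 \<or> n = 6 \<or> n = 7 \<or> n = 8 \<or> n = 9 \<or> n = 10 \<or> n = 11 \<or> n = 12 \<or> n = 13 \<or> n = 14 \<or> n = 15 \<or> n = 16 \<or> n = 17 \<or> n = 18 \<or> n = 19" using assms by presburger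
  then show ?thesis
    by (elim disjE) (simp_all only: small_2 small_3 small_4 small_5 small_6 small_7 small_8 small_9 small_10 small_11 small_12 small_13 small_14 small_15 small_16 small_17 small_18 small_19)
qed

end
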